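(* Let $X,Y$ be Banach lattices and let $\mathcal S$ be a family of convex continuous operators $X\to Y$ such that $\sup_{S\in\mathcal S}\|Sx\|<\infty$ for all $x\in X$. Then: (i) there exists $r>0$ with $\sup_{S\in\mathcal S}\|S\|_r<\infty$; (ii) for every $x_0\in X$ there exists $r>0$ with $\sup_{x\in B(x_0,r)}\sup_{S\in\mathcal S}\|S_x\|_r<\infty$.
   Context: An operator $S\colon X\to Y$ is convex if $S(\lambda x+(1-\lambda)y)\le\lambda Sx+(1-\lambda)Sy$ for all $x,y\in X$, $\lambda\in[0,1]$. $B(x_0,r):=\{x\in X:\|x-x_0\|\le r\}$, $\|S\|_r:=\sup_{x\in B(0,r)}\|Sx\|$, and $S_x y:=S(x+y)-Sx$ for $x,y\in X$. *)

theory Defs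
  imports "HOL-Analysis.Analysis"
begin

class banach_lattice = banach + ordered_real_vector + lattice +
  assumes lattice_norm: "sup x (- x) \<le> sup y (- y) \<Longrightarrow> norm x \<le> norm y"

definition convex_operator :: "('a::real_vector \<Rightarrow> 'b::ordered_real_vector) \<Rightarrow> bool" where
  "convex_operator S \<longleftrightarrow>
     (\<forall>x y. \<forall>t::real. 0 \<le> t \<and> t \<le> 1 \<longrightarrow>
        S (t *\<^sub>R x + (1 - t) *\<^sub>R y) \<le> t *\<^sub>R S x + (1 - t) *\<^sub>R S y)"

definition op_rnorm :: "('a::real_normed_vector \<Rightarrow> 'b::real_normed_vector) \<Rightarrow> real \<Rightarrow> ereal" where
  "op_rnorm S r = (SUP x\<in>cball 0 r. ereal (norm (S x)))"

definition shift_op :: "('a::real_vector \<Rightarrow> 'b::real_vector) \<Rightarrow> 'a \<Rightarrow> 'a \<Rightarrow> 'b" where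
  "shift_op S x = (\<lambda>y. S (x + y) - S x)"

end

theory Submission
  imports Defs
begin

lemma half_conv_le:
  fixes w a c :: "'b::ordered_real_vector"
  assumes "w \<le> (1/2) *\<^sub>R a + (1/2) *\<^sub>R c"
  shows "2 *\<^sub>R w - c \<le> a"
proof -
  have "2 *\<^sub>R w \<le> 2 *\<^sub>R ((1/2) *\<^sub>R a + (1/2) *\<^sub>R c)"
    using assms by (intro scaleR_left_mono) auto
  also have "\<dots> = a + c" by (simp add: scaleR_add_right)
  finally show ?thesis by (simp add: diff_le_eq)
qed

lemma abs_nonneg_bl:
  fixes a :: "'b::banach_lattice"
  shows "0 \<le> sup a (- a)"
proof -
  have "a + - a \<le> sup a (-a) + sup a (-a)"
    by (intro add_mono) auto
  hence "0 \<le> 2 *\<^sub>R sup a (-a)" by (simp add: scaleR_2)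
  hence "0 \<le> (1/2) *\<^sub>R (2 *\<^sub>R sup a (-a))"
    by (rule scaleR_nonneg_nonneg[rotated]) simp
  also have "(1/2) *\<^sub>R (2 *\<^sub>R sup a (-a)) = sup a (-a)"
    by (simp only: scaleR_scaleR) simp
  finally show ?thesis .
qed

lemma norm_abs_bl:
  fixes a :: "'b::banach_lattice"
  shows "norm (sup a (- a)) \<le> norm a"
proof (rule lattice_norm)
  have "0 \<le> sup a (- a)" by (rule abs_nonneg_bl)
  hence "- sup a (- a) \<le> sup a (- a)"
    by (meson neg_le_0_iff_le order_trans)
  thus "sup (sup a (- a)) (- sup a (- a)) \<le> sup a (- a)" by simp
qed

lemma sandwich_bl:
  fixes a b z :: "'b::banach_lattice"
  assumes "a \<le> z" "z \<le> b"
  shows "norm z \<le> norm a + norm b"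
proof -
  define A where "A = sup a (-a)"
  define B where "B = sup b (-b)"
  have A0: "0 \<le> A" and B0: "0 \<le> B" unfolding A_def B_def by (rule abs_nonneg_bl)+
  have "z \<le> A + B"
  proof -
    have "z \<le> B" using assms(2) unfolding B_def by (meson order_trans sup_ge1)
    also have "B \<le> A + B" using A0 by (simp add: add_increasing)
    finally show ?thesis .
  qed
  moreover have "- z \<le> A + B"
  proof -
    have "- z \<le> - a" using assms(1) by simp
    also have "- a \<le> A" unfolding A_def by simp
    also have "A \<le> A + B" using B0 by (simp add: add_increasing2)
    finally show ?thesis .
  qed
  ultimately have "sup z (- z) \<le> sup (A + B) (- (A + B))"
    by (meson le_supI le_supI1)
  hence "norm z \<le> norm (A + B)" by (rule lattice_norm)
  also have "\<dots> \<le> norm A + norm B" by (rule norm_triangle_ineq)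
  also have "\<dots> \<le> norm a + norm b"
    unfolding A_def B_def by (intro add_mono norm_abs_bl)
  finally show ?thesis .
qed


lemma conv_half:
  assumes "convex_operator S"
  shows "S ((1/2) *\<^sub>R u + (1/2) *\<^sub>R p) \<le> (1/2) *\<^sub>R S u + (1/2) *\<^sub>R S p"
proof -
  have h: "(1::real) - 1/2 = 1/2" by simp
  have A: "\<And>x y t. 0 \<le> t \<Longrightarrow> t \<le> 1 \<Longrightarrow> S (t *\<^sub>R x + (1 - t) *\<^sub>R y) \<le> t *\<^sub>R S x + (1 - t) *\<^sub>R S y"
    using assms unfolding convex_operator_def by blast
  have "S ((1/2) *\<^sub>R u + (1 - 1/2) *\<^sub>R p) \<le> (1/2) *\<^sub>R S u + (1 - 1/2) *\<^sub>R S p"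
    by (rule A) simp_all
  thus ?thesis unfolding h .
qed

lemma local_bound:
  fixes \<S> :: "('a::banach_lattice \<Rightarrow> 'b::banach_lattice) set"
  assumes conv: "\<And>S. S \<in> \<S> \<Longrightarrow> convex_operator S"
    and cont: "\<And>S. S \<in> \<S> \<Longrightarrow> continuous_on UNIV S"
    and ptw: "\<And>x. (SUP S\<in>\<S>. ereal (norm (S x))) < \<infinity>"
  shows "\<exists>r>0. \<exists>M. \<forall>S\<in>\<S>. \<forall>z\<in>cball x0 r. norm (S z) \<le> M"
proof -
  have pb: "\<exists>n::nat. \<forall>S\<in>\<S>. norm (S x) \<le> real n" for x
  proof -
    obtain n :: nat where n: "(SUP S\<in>\<S>. ereal (norm (S x))) < ereal (real n)"
      using ptw[of x] less_PInf_Ex_of_nat by auto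
    have "\<forall>S\<in>\<S>. norm (S x) \<le> real n"
    proof
      fix S assume "S \<in> \<S>"
      hence "ereal (norm (S x)) \<le> (SUP S\<in>\<S>. ereal (norm (S x)))" by (rule SUP_upper)
      hence "ereal (norm (S x)) < ereal (real n)" using n by (rule le_less_trans)
      thus "norm (S x) \<le> real n" by simp
    qed
    thus ?thesis by blast
  qed
  define F where "F n = {x. \<forall>S\<in>\<S>. norm (S x) \<le> real n}" for n :: nat
  have closedF: "closed (F n)" for n
  proof -
    have "F n = (\<Inter>S\<in>\<S>. {x. norm (S x) \<le> real n})" unfolding F_def by auto
    moreover have "closed {x. norm (S x) \<le> real n}" if "S \<in> \<S>" for S
    proof (rule closed_Collect_le)
      show "continuous_on UNIV (\<lambda>x. norm (S x))" by (rule continuous_on_norm[OF cont[OF that]])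
    qed simp
    ultimately show ?thesis by (simp add: closed_INT)
  qed
  have UF: "\<Union>(range F) = UNIV" using pb unfolding F_def by auto
  have "\<exists>n. interior (F n) \<noteq> {}"
  proof (rule ccontr)
    assume H: "\<not> (\<exists>n. interior (F n) \<noteq> {})"
    have "euclidean interior_of \<Union>(range F) = {}"
    proof (rule Baire_category_alt)
      show "completely_metrizable_space (euclidean :: 'a topology) \<or> locally_compact_space euclidean \<and> regular_space euclidean"
        by (rule disjI1, rule completely_metrizable_space_euclidean)
      show "countable (range F)" by simp
      fix T assume "T \<in> range F"
      then obtain m where Tm: "T = F m" by blast
      have "closedin euclidean T" unfolding Tm closed_closedin[symmetric] by (rule closedF)
      moreover have "euclidean interior_of T = {}" unfolding Tm euclidean_interior_of using H by blast
      ultimately show "closedin euclidean T \<and> euclidean interior_of T = {}" by blast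
    qed
    thus False unfolding UF euclidean_interior_of by simp
  qed
  then obtain n x1 where x1: "x1 \<in> interior (F n)" by blast
  have "open (interior (F n))" by simp
  then obtain e where e0: "e > 0" and e1: "ball x1 e \<subseteq> interior (F n)"
    using x1 unfolding open_contains_ball by blast
  have e: "e > 0" "ball x1 e \<subseteq> F n" using e0 e1 interior_subset by blast+
  define p where "p = 2 *\<^sub>R x0 - x1"
  obtain Cp :: nat where Cp: "\<forall>S\<in>\<S>. norm (S p) \<le> real Cp" using pb by blast
  obtain C0 :: nat where C0: "\<forall>S\<in>\<S>. norm (S x0) \<le> real C0" using pb by blast
  define bnd where "bnd S z = (1/2) *\<^sub>R S (2 *\<^sub>R z - p) + (1/2) *\<^sub>R S p" for S :: "'a \<Rightarrow> 'b" and z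
  have upper: "S z \<le> bnd S z \<and> norm (bnd S z) \<le> real n + real Cp"
    if S: "S \<in> \<S>" and z: "norm (z - x0) < e/2" for S z
  proof
    have eq: "(1/2) *\<^sub>R (2 *\<^sub>R z - p) + (1/2) *\<^sub>R p = z"
      by (simp add: algebra_simps)
    have "S ((1/2) *\<^sub>R (2 *\<^sub>R z - p) + (1/2) *\<^sub>R p) \<le> bnd S z"
      unfolding bnd_def by (rule conv_half[OF conv[OF S]])
    then show "S z \<le> bnd S z" unfolding eq .
    have "2 *\<^sub>R z - p - x1 = 2 *\<^sub>R (z - x0)" unfolding p_def by (simp add: algebra_simps)
    hence "norm (2 *\<^sub>R z - p - x1) = 2 * norm (z - x0)" by simp
    hence "dist x1 (2 *\<^sub>R z - p) = 2 * norm (z - x0)"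
      by (simp only: dist_norm norm_minus_commute)
    hence "2 *\<^sub>R z - p \<in> F n" using z e by auto
    hence "norm (S (2 *\<^sub>R z - p)) \<le> real n" using S unfolding F_def by auto
    moreover have "norm (S p) \<le> real Cp" using Cp S by auto
    moreover have "norm (bnd S z) \<le> norm ((1/2) *\<^sub>R S (2 *\<^sub>R z - p)) + norm ((1/2) *\<^sub>R S p)"
      unfolding bnd_def by (rule norm_triangle_ineq)
    ultimately show "norm (bnd S z) \<le> real n + real Cp"
      by simp
  qed
  show ?thesis
  proof (intro exI conjI ballI)
    show "e/4 > 0" using e by simp
    fix S z assume S: "S \<in> \<S>" and z: "z \<in> cball x0 (e/4)"
    have z2: "norm (z - x0) < e/2" using z e by (simp add: dist_norm norm_minus_commute)
    define z' where "z' = 2 *\<^sub>R x0 - z"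
    have "z' - x0 = x0 - z" unfolding z'_def by (simp add: algebra_simps scaleR_2)
    hence z'2: "norm (z' - x0) < e/2" using z2 by (simp add: norm_minus_commute)
    have eq: "(1/2) *\<^sub>R z + (1/2) *\<^sub>R z' = x0" unfolding z'_def by (simp add: algebra_simps)
    have "S ((1/2) *\<^sub>R z + (1/2) *\<^sub>R z') \<le> (1/2) *\<^sub>R S z + (1/2) *\<^sub>R S z'"
      by (rule conv_half[OF conv[OF S]])
    hence "S x0 \<le> (1/2) *\<^sub>R S z + (1/2) *\<^sub>R S z'" unfolding eq .
    hence l1: "2 *\<^sub>R S x0 - S z' \<le> S z" by (rule half_conv_le)
    have l2: "2 *\<^sub>R S x0 - bnd S z' \<le> 2 *\<^sub>R S x0 - S z'"
      using upper[OF S z'2] by simp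
    have lo: "2 *\<^sub>R S x0 - bnd S z' \<le> S z" using l2 l1 by (rule order_trans)
    have hi: "S z \<le> bnd S z" using upper[OF S z2] by blast
    have "norm (S z) \<le> norm (2 *\<^sub>R S x0 - bnd S z') + norm (bnd S z)"
      by (rule sandwich_bl[OF lo hi])
    also have "\<dots> \<le> (2 * real C0 + (real n + real Cp)) + (real n + real Cp)"
    proof -
      have "norm (2 *\<^sub>R S x0 - bnd S z') \<le> norm (2 *\<^sub>R S x0) + norm (bnd S z')"
        by (rule norm_triangle_ineq4)
      hence "norm (2 *\<^sub>R S x0 - bnd S z') \<le> 2 * norm (S x0) + norm (bnd S z')"
        by simp
      moreover have "norm (S x0) \<le> real C0" using C0 S by blast
      moreover have "norm (bnd S z') \<le> real n + real Cp" using upper[OF S z'2] by blast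
      moreover have "norm (bnd S z) \<le> real n + real Cp" using upper[OF S z2] by blast
      ultimately show ?thesis by linarith
    qed
    finally show "norm (S z) \<le> 2 * real C0 + 2 * (real n + real Cp)" by simp
  qed
qed


theorem theoremA9:
  fixes \<S> :: "('a::banach_lattice \<Rightarrow> 'b::banach_lattice) set"
  assumes conv: "\<And>S. S \<in> \<S> \<Longrightarrow> convex_operator S"
    and cont: "\<And>S. S \<in> \<S> \<Longrightarrow> continuous_on UNIV S"
    and ptw: "\<And>x. (SUP S\<in>\<S>. ereal (norm (S x))) < \<infinity>"
  shows "(\<exists>r>0. (SUP S\<in>\<S>. op_rnorm S r) < \<infinity>)
       \<and> (\<forall>x0. \<exists>r>0. (SUP x\<in>cball x0 r. SUP S\<in>\<S>. op_rnorm (shift_op S x) r) < \<infinity>)"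
proof
  obtain r M where r: "r > 0" and M: "\<forall>S\<in>\<S>. \<forall>z\<in>cball 0 r. norm (S z) \<le> M"
    using local_bound[OF conv cont ptw, of 0] by blast
  have "(SUP S\<in>\<S>. op_rnorm S r) \<le> ereal M"
  proof (rule SUP_least)
    fix S assume S: "S \<in> \<S>"
    show "op_rnorm S r \<le> ereal M" unfolding op_rnorm_def
    proof (rule SUP_least)
      fix x :: 'a assume "x \<in> cball 0 r"
      thus "ereal (norm (S x)) \<le> ereal M" using M S by simp
    qed
  qed
  also have "\<dots> < \<infinity>" by simp
  finally show "\<exists>r>0. (SUP S\<in>\<S>. op_rnorm S r) < \<infinity>" using r by blast
next
  show "\<forall>x0. \<exists>r>0. (SUP x\<in>cball x0 r. SUP S\<in>\<S>. op_rnorm (shift_op S x) r) < \<infinity>"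
  proof
    fix x0 :: 'a
    obtain r M where r: "r > 0" and M: "\<forall>S\<in>\<S>. \<forall>z\<in>cball x0 r. norm (S z) \<le> M"
      using local_bound[OF conv cont ptw, of x0] by blast
    have "(SUP x\<in>cball x0 (r/2). SUP S\<in>\<S>. op_rnorm (shift_op S x) (r/2)) \<le> ereal (2 * M)"
    proof (rule SUP_least)
      fix x :: 'a assume x: "x \<in> cball x0 (r/2)"
      show "(SUP S\<in>\<S>. op_rnorm (shift_op S x) (r/2)) \<le> ereal (2 * M)"
      proof (rule SUP_least)
        fix S assume S: "S \<in> \<S>"
        show "op_rnorm (shift_op S x) (r/2) \<le> ereal (2 * M)" unfolding op_rnorm_def
        proof (rule SUP_least)
          fix y :: 'a assume y: "y \<in> cball 0 (r/2)"
          have xr: "x \<in> cball x0 r" using x r by simp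
          have "norm (x0 - (x + y)) \<le> norm (x0 - x) + norm y"
            using norm_triangle_ineq4[of "x0 - x" y] by (simp add: algebra_simps)
          hence xyr: "x + y \<in> cball x0 r" using x y by (simp add: dist_norm)
          have "norm (S (x + y) - S x) \<le> norm (S (x + y)) + norm (S x)"
            by (rule norm_triangle_ineq4)
          also have "\<dots> \<le> M + M" using M S xr xyr by (meson add_mono)
          finally show "ereal (norm (shift_op S x y)) \<le> ereal (2 * M)"
            unfolding shift_op_def by simp
        qed
      qed
    qed
    also have "\<dots> < \<infinity>" by simp
    finally show "\<exists>r>0. (SUP x\<in>cball x0 r. SUP S\<in>\<S>. op_rnorm (shift_op S x) r) < \<infinity>"
      using r by (intro exI[of _ "r/2"]) simp
  qed
qed

end
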